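(* Let $G=(V,E)$ be a claw-free graph, let $L\subseteq V$ be such that $G[L]$ is an induced path or a hole, and let $\mathbf{j}\in V\setminus L$. Write $N=\Gamma_L(\mathbf{j})$. Then one of the following holds: (a.i) $N=\emptyset$; (a.ii) $|N|=2$ and the two vertices of $N$ are adjacent; (a.iii) $|N|=4$ and $G[N]$ is either a disjoint union of two edges or a path with three edges; (a.iv) $L$ is a hole of length four and $N=L$; (a.v) $L$ is an induced path with at least one edge and $N$ consists of the two endpoints of $L$; (b.i) $|N|=3$, $G[N]$ is a path with two edges, and each vertex of $N$ has two neighbours in $L$; (b.ii) $L$ is a hole of length five and $N=L$; (b.iii) $L$ is an induced path and $N$ consists of exactly one endpoint of $L$; (b.iv) $L$ is an induced path and $N=\{\mathbf{e},\mathbf{x},\mathbf{y}\}$ where $\mathbf{e}$ is an endpoint of $L$ and $\mathbf{x},\mathbf{y}$ are adjacent vertices of $L$.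
   Context: A hole is an induced cycle of length at least 4. An induced path is a vertex set $\{\mathbf{j}_0,\dots,\mathbf{j}_\ell\}$ whose induced edges are exactly $\{\mathbf{j}_i,\mathbf{j}_{i+1}\}$, $0\le i<\ell$; its endpoints are $\mathbf{j}_0,\mathbf{j}_\ell$. The claw is $K_{1,3}$; claw-free means no four vertices induce a claw. $\Gamma_L(\mathbf{j})=\Gamma(\mathbf{j})\cap L$ is the set of neighbours of $\mathbf{j}$ in $L$. *)

theory Defs
  imports Main
begin

definition graph :: "'a set \<Rightarrow> ('a \<Rightarrow> 'a \<Rightarrow> bool) \<Rightarrow> bool" where
  "graph V E \<longleftrightarrow> (\<forall>x y. E x y \<longrightarrow> E y x) \<and> (\<forall>x. \<not> E x x)
     \<and> (\<forall>x y. E x y \<longrightarrow> x \<in> V \<and> y \<in> V)"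

definition claw_free :: "'a set \<Rightarrow> ('a \<Rightarrow> 'a \<Rightarrow> bool) \<Rightarrow> bool" where
  "claw_free V E \<longleftrightarrow> \<not> (\<exists>c x y z. c \<in> V \<and> x \<in> V \<and> y \<in> V \<and> z \<in> V \<and>
     x \<noteq> y \<and> x \<noteq> z \<and> y \<noteq> z \<and> E c x \<and> E c y \<and> E c z \<and>
     \<not> E x y \<and> \<not> E x z \<and> \<not> E y z)"

definition induced_path :: "('a \<Rightarrow> 'a \<Rightarrow> bool) \<Rightarrow> 'a list \<Rightarrow> bool" where
  "induced_path E ps \<longleftrightarrow> ps \<noteq> [] \<and> distinct ps \<and>
     (\<forall>i<length ps. \<forall>j<length ps. E (ps ! i) (ps ! j) \<longleftrightarrow> (i = j + 1 \<or> j = i + 1))"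

definition induced_hole :: "('a \<Rightarrow> 'a \<Rightarrow> bool) \<Rightarrow> 'a list \<Rightarrow> bool" where
  "induced_hole E cs \<longleftrightarrow> length cs \<ge> 4 \<and> distinct cs \<and>
     (\<forall>i<length cs. \<forall>j<length cs. E (cs ! i) (cs ! j) \<longleftrightarrow>
        (j = (i + 1) mod length cs \<or> i = (j + 1) mod length cs))"

definition is_induced_path_set :: "('a \<Rightarrow> 'a \<Rightarrow> bool) \<Rightarrow> 'a set \<Rightarrow> bool" where
  "is_induced_path_set E L \<longleftrightarrow> (\<exists>ps. induced_path E ps \<and> set ps = L)"

definition is_hole_set :: "('a \<Rightarrow> 'a \<Rightarrow> bool) \<Rightarrow> 'a set \<Rightarrow> bool" where
  "is_hole_set E L \<longleftrightarrow> (\<exists>cs. induced_hole E cs \<and> set cs = L)"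

definition path_endpoint :: "('a \<Rightarrow> 'a \<Rightarrow> bool) \<Rightarrow> 'a set \<Rightarrow> 'a \<Rightarrow> bool" where
  "path_endpoint E L v \<longleftrightarrow> (\<exists>ps. induced_path E ps \<and> set ps = L \<and> (v = hd ps \<or> v = last ps))"

definition nbhd_in :: "('a \<Rightarrow> 'a \<Rightarrow> bool) \<Rightarrow> 'a set \<Rightarrow> 'a \<Rightarrow> 'a set" where
  "nbhd_in E L j = {v \<in> L. E j v}"

end

theory Submission
  imports Defs
begin

lemma claw_contra:
  assumes "claw_free V E" "c \<in> V" "x \<in> V" "y \<in> V" "z \<in> V"
    "x \<noteq> y" "x \<noteq> z" "y \<noteq> z" "E c x" "E c y" "E c z"
    "\<not> E x y" "\<not> E x z" "\<not> E y z"
  shows False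
  using assms unfolding claw_free_def by blast

lemma ip_adj:
  assumes "induced_path E ps" "i < length ps" "k < length ps"
  shows "E (ps!i) (ps!k) \<longleftrightarrow> (i = k+1 \<or> k = i+1)"
  using assms unfolding induced_path_def by blast

lemma ip_sub:
  assumes "induced_path E ps" "a + l \<le> length ps" "0 < l"
  shows "induced_path E (map (nth ps) [a..<a+l])"
proof -
  have d: "distinct ps" using assms(1) by (simp add: induced_path_def)
  have "distinct (map (nth ps) [a..<a+l])"
    using d assms(2) by (auto simp: distinct_map inj_on_def nth_eq_iff_index_eq)
  moreover have "\<forall>i<l. \<forall>k<l. E (ps!(a+i)) (ps!(a+k)) \<longleftrightarrow> (i = k+1 \<or> k = i+1)"
    using ip_adj[OF assms(1)] assms(2) by auto
  ultimately show ?thesis using assms(3) unfolding induced_path_def by auto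
qed

lemma path_deg2:
  assumes "induced_path E ps" "0 < i" "i + 1 < length ps"
  shows "card (nbhd_in E (set ps) (ps!i)) = 2"
proof -
  have d: "distinct ps" using assms(1) by (simp add: induced_path_def)
  have "nbhd_in E (set ps) (ps!i) = {ps!(i-1), ps!(i+1)}"
  proof (rule set_eqI)
    fix w show "w \<in> nbhd_in E (set ps) (ps!i) \<longleftrightarrow> w \<in> {ps!(i-1), ps!(i+1)}"
    proof
      assume "w \<in> nbhd_in E (set ps) (ps!i)"
      then obtain k where k: "k < length ps" "w = ps!k" "E (ps!i) (ps!k)"
        by (auto simp: nbhd_in_def in_set_conv_nth)
      then have "i = k+1 \<or> k = i+1" using ip_adj[OF assms(1)] assms by auto
      then show "w \<in> {ps!(i-1), ps!(i+1)}" using k by auto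
    next
      assume "w \<in> {ps!(i-1), ps!(i+1)}"
      then show "w \<in> nbhd_in E (set ps) (ps!i)"
        using ip_adj[OF assms(1), of i] assms by (auto simp: nbhd_in_def)
    qed
  qed
  moreover have "ps!(i-1) \<noteq> ps!(i+1)" using d assms by (simp add: nth_eq_iff_index_eq)
  ultimately show ?thesis by simp
qed

lemma path_H1:
  assumes cf: "claw_free V E" and LV: "set ps \<subseteq> V" and ip: "induced_path E ps"
    and jV: "j \<in> V" and jL: "j \<notin> set ps"
    and xy: "x < y" and yz: "y < z" and zn: "z < length ps"
    and ex: "E j (ps!x)" and ey: "E j (ps!y)" and ez: "E j (ps!z)"
  shows "y = x+1 \<or> z = y+1"
proof (rule ccontr)
  assume h: "\<not> (y = x+1 \<or> z = y+1)"
  have d: "distinct ps" using ip by (simp add: induced_path_def)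
  have ln: "x < length ps" "y < length ps" using xy yz zn by auto
  show False
  proof (rule claw_contra[OF cf jV, of "ps!x" "ps!y" "ps!z"])
    show "ps!x \<in> V" "ps!y \<in> V" "ps!z \<in> V" using LV ln zn nth_mem by blast+
    show "ps!x \<noteq> ps!y" "ps!x \<noteq> ps!z" "ps!y \<noteq> ps!z"
      using d ln zn xy yz by (auto simp: nth_eq_iff_index_eq)
    show "E j (ps!x)" "E j (ps!y)" "E j (ps!z)" by fact+
    show "\<not> E (ps!x) (ps!y)" "\<not> E (ps!x) (ps!z)" "\<not> E (ps!y) (ps!z)"
      using ip_adj[OF ip] ln zn xy yz h by auto
  qed
qed

lemma comb:
  fixes S :: "nat set"
  assumes sub: "S \<subseteq> {..<n}"
    and H1: "\<And>x y z. x \<in> S \<Longrightarrow> y \<in> S \<Longrightarrow> z \<in> S \<Longrightarrow> x < y \<Longrightarrow> y < z \<Longrightarrow> y = x+1 \<or> z = y+1"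
    and H2: "\<And>i. i \<in> S \<Longrightarrow> 0 < i \<Longrightarrow> i+1 < n \<Longrightarrow> i-1 \<in> S \<or> i+1 \<in> S"
  shows "S = {} \<or> (\<exists>a. S = {a} \<and> (a = 0 \<or> a+1 = n)) \<or> (\<exists>a. S = {a, a+1})
    \<or> (S = {0, n-1} \<and> 2 < n) \<or> (\<exists>a. S = {a, a+1, a+2})
    \<or> (\<exists>a. S = {0, a, a+1} \<and> 1 < a) \<or> (\<exists>a. S = {a, a+1, n-1} \<and> a+3 < n)
    \<or> (\<exists>a. S = {a, a+1, a+2, a+3}) \<or> (\<exists>a b. S = {a, a+1, b, b+1} \<and> a+2 < b)"
proof (cases "S = {}")
  case True then show ?thesis by simp
next
  case False
  have fin: "finite S" using sub finite_subset by blast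
  define a where "a = Min S"
  define b where "b = Max S"
  have aS: "a \<in> S" using fin False a_def by simp
  have bS: "b \<in> S" using fin False b_def by simp
  have amin: "\<And>y. y \<in> S \<Longrightarrow> a \<le> y" using fin a_def by simp
  have bmax: "\<And>y. y \<in> S \<Longrightarrow> y \<le> b" using fin b_def by simp
  have bn: "b < n" using bS sub by auto
  have ab: "a \<le> b" using amin bS by simp
  have mid: "\<And>y. y \<in> S \<Longrightarrow> y = a \<or> y = a+1 \<or> y+1 = b \<or> y = b"
  proof -
    fix y assume y: "y \<in> S"
    show "y = a \<or> y = a+1 \<or> y+1 = b \<or> y = b"
    proof (cases "a < y \<and> y < b")
      case True then show ?thesis using H1[OF aS y bS] by auto
    next
      case False then show ?thesis using amin[OF y] bmax[OF y] by auto
    qed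
  qed
  have E2: "\<And>i. i \<in> S \<Longrightarrow> (\<forall>k. k + 1 = i \<longrightarrow> k \<notin> S) \<Longrightarrow> i + 1 \<notin> S \<Longrightarrow> i = 0 \<or> i + 1 = n"
  proof -
    fix i assume a1: "i \<in> S" and a2: "\<forall>k. k + 1 = i \<longrightarrow> k \<notin> S" and a3: "i + 1 \<notin> S"
    have "i < n" using \<open>i \<in> S\<close> sub by auto
    moreover have "0 < i \<Longrightarrow> i - 1 \<notin> S" using a2 by (metis Suc_diff_1 Suc_eq_plus1)
    ultimately show "i = 0 \<or> i + 1 = n" using H2[of i] a1 a3 by linarith
  qed
  have lo: "\<And>y. y \<in> S \<Longrightarrow> y < a \<Longrightarrow> False" using amin by force
  have hi: "\<And>y. y \<in> S \<Longrightarrow> b < y \<Longrightarrow> False" using bmax by force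
  consider "b = a" | "b = a+1" | "b = a+2" | "b = a+3" | "a+4 \<le> b" using ab by linarith
  then show ?thesis
  proof cases
    case 1
    then have Sa: "S = {a}" using mid aS amin bmax by fastforce
    then have "a = 0 \<or> a + 1 = n" by (intro E2) (use Sa in auto)
    then show ?thesis using Sa apply - apply (rule disjI2, rule disjI1, rule exI[of _ a], blast) done
  next
    case 2
    then have "S = {a, a+1}" using mid aS bS amin bmax by fastforce
    then show ?thesis apply - apply (rule disjI2, rule disjI2, rule disjI1, rule exI[of _ a], blast) done
  next
    case 3
    have Ssub: "S \<subseteq> {a, a+1, a+2}"
    proof
      fix y assume "y \<in> S" from mid[OF this] 3 show "y \<in> {a, a+1, a+2}" by auto
    qed
    show ?thesis
    proof (cases "a+1 \<in> S")
      case True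
      then have "S = {a, a+1, a+2}" using Ssub aS bS 3 by auto
      then show ?thesis apply - apply (rule disjI2, rule disjI2, rule disjI2, rule disjI2, rule disjI1, rule exI[of _ a], blast) done
    next
      case False
      then have Sa: "S = {a, a+2}" using Ssub aS bS 3 by auto
      have e1: "a = 0 \<or> a + 1 = n" by (rule E2) (use Sa False bn 3 in auto)
      have a0: "a = 0" using e1 Sa False bn 3 by auto
      have e2: "a+2 = 0 \<or> a+2 + 1 = n" by (rule E2) (use Sa False bn 3 in auto)
      have hh: "a + 3 = n" using e2 Sa False bn 3 by auto
      have "S = {0, n-1} \<and> 2 < n" using a0 hh Sa by auto
      then show ?thesis apply - apply (rule disjI2, rule disjI2, rule disjI2, rule disjI1, blast) done
    qed
  next
    case 4
    have Ssub: "S \<subseteq> {a, a+1, a+2, a+3}"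
    proof
      fix y assume "y \<in> S" from mid[OF this] 4 show "y \<in> {a, a+1, a+2, a+3}" by auto
    qed
    consider "a+1 \<in> S" "a+2 \<in> S" | "a+1 \<in> S" "a+2 \<notin> S" | "a+1 \<notin> S" "a+2 \<in> S"
      | "a+1 \<notin> S" "a+2 \<notin> S" by blast
    then show ?thesis
    proof cases
      case 1
      then have "S = {a, a+1, a+2, a+3}" using Ssub aS bS 4 by auto
      then show ?thesis apply - apply (rule disjI2, rule disjI2, rule disjI2, rule disjI2, rule disjI2, rule disjI2, rule disjI2, rule disjI1, rule exI[of _ a], blast) done
    next
      case 2
      then have Sa: "S = {a, a+1, a+3}" using Ssub aS bS 4 by auto
      have e3: "a+3 = 0 \<or> a+3 + 1 = n" by (rule E2) (use Sa 2 bn 4 in auto)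
      have "a + 4 = n" using e3 Sa 2 bn 4 by auto
      then have "S = {a, a+1, n-1} \<and> a+3 < n" using Sa by auto
      then show ?thesis apply - apply (rule disjI2, rule disjI2, rule disjI2, rule disjI2, rule disjI2, rule disjI2, rule disjI1, rule exI[of _ a], blast) done
    next
      case 3
      then have Sa: "S = {a, a+2, a+3}" using Ssub aS bS 4 by auto
      have e4: "a = 0 \<or> a + 1 = n" by (rule E2) (use Sa 3 bn 4 in auto)
      have a0: "a = 0" using e4 Sa 3 bn 4 by auto
      then have "S = {0, 2, 2+1} \<and> 1 < (2::nat)" using Sa by auto
      then show ?thesis apply - apply (rule disjI2, rule disjI2, rule disjI2, rule disjI2, rule disjI2, rule disjI1, rule exI[of _ 2], blast) done
    next
      case 4
      then have Sa: "S = {a, a+3}" using Ssub aS bS \<open>b = a+3\<close> by auto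
      have e5: "a = 0 \<or> a + 1 = n" by (rule E2) (use Sa 4 bn \<open>b = a+3\<close> in auto)
      have a0: "a = 0" using e5 Sa 4 bn \<open>b = a+3\<close> by auto
      have e6: "a+3 = 0 \<or> a+3 + 1 = n" by (rule E2) (use Sa 4 bn \<open>b = a+3\<close> in auto)
      have hh: "a + 4 = n" using e6 Sa 4 bn \<open>b = a+3\<close> by auto
      have "S = {0, n-1} \<and> 2 < n" using a0 hh Sa by auto
      then show ?thesis apply - apply (rule disjI2, rule disjI2, rule disjI2, rule disjI1, blast) done
    qed
  next
    case 5
    have Ssub: "S \<subseteq> {a, a+1, b-1, b}"
    proof
      fix y assume "y \<in> S" from mid[OF this] 5 show "y \<in> {a, a+1, b-1, b}" by auto
    qed
    consider "a+1 \<in> S" "b-1 \<in> S" | "a+1 \<in> S" "b-1 \<notin> S" | "a+1 \<notin> S" "b-1 \<in> S"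
      | "a+1 \<notin> S" "b-1 \<notin> S" by blast
    then show ?thesis
    proof cases
      case 1
      then have "S = {a, a+1, b-1, b-1+1} \<and> a+2 < b-1" using Ssub aS bS 5 by auto
      then show ?thesis apply - apply (rule disjI2, rule disjI2, rule disjI2, rule disjI2, rule disjI2, rule disjI2, rule disjI2, rule disjI2, rule exI[of _ a], rule exI[of _ "b-1"], blast) done
    next
      case 2
      then have Sa: "S = {a, a+1, b}" using Ssub aS bS 5 by auto
      have e7: "b = 0 \<or> b + 1 = n" by (rule E2) (use Sa 2 bn 5 in auto)
      have "b + 1 = n" using e7 Sa 2 bn 5 by auto
      then have "S = {a, a+1, n-1} \<and> a+3 < n" using Sa 5 by auto
      then show ?thesis apply - apply (rule disjI2, rule disjI2, rule disjI2, rule disjI2, rule disjI2, rule disjI2, rule disjI1, rule exI[of _ a], blast) done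
    next
      case 3
      then have Sa: "S = {a, b-1, b}" using Ssub aS bS 5 by auto
      have e8: "a = 0 \<or> a + 1 = n" by (rule E2) (use Sa 3 bn 5 in auto)
      have a0: "a = 0" using e8 Sa 3 bn 5 by auto
      then have "S = {0, b-1, b-1+1} \<and> 1 < b-1" using Sa 5 by auto
      then show ?thesis apply - apply (rule disjI2, rule disjI2, rule disjI2, rule disjI2, rule disjI2, rule disjI1, rule exI[of _ "b-1"], blast) done
    next
      case 4
      then have Sa: "S = {a, b}" using Ssub aS bS 5 by auto
      have e9: "a = 0 \<or> a + 1 = n" by (rule E2) (use Sa 4 bn 5 in auto)
      have a0: "a = 0" using e9 Sa 4 bn 5 by auto
      have e10: "b = 0 \<or> b + 1 = n" by (rule E2) (use Sa 4 bn 5 in auto)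
      have hh: "b + 1 = n" using e10 Sa 4 bn 5 by auto
      have "S = {0, n-1} \<and> 2 < n" using a0 hh Sa 5 by auto
      then show ?thesis apply - apply (rule disjI2, rule disjI2, rule disjI2, rule disjI1, blast) done
    qed
  qed
qed

lemma ip_distinct: "induced_path E ps \<Longrightarrow> distinct ps" by (simp add: induced_path_def)

lemma tr2:
  assumes ip: "induced_path E ps" and a: "a + 1 < length ps"
  shows "card (nth ps ` {a, a+1}) = 2 \<and> (\<exists>x y. nth ps ` {a, a+1} = {x, y} \<and> E x y)"
proof -
  have "ps!a \<noteq> ps!(a+1)" using ip_distinct[OF ip] a by (simp add: nth_eq_iff_index_eq)
  moreover have "E (ps!a) (ps!(a+1))" using ip_adj[OF ip] a by auto
  ultimately show ?thesis by auto
qed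

lemma tr3:
  assumes ip: "induced_path E ps" and a: "a + 2 < length ps"
  shows "card (nth ps ` {a, a+1, a+2}) = 3 \<and>
     (\<exists>qs. induced_path E qs \<and> length qs = 3 \<and> set qs = nth ps ` {a, a+1, a+2})"
proof -
  have d: "distinct ps" using ip_distinct[OF ip] .
  have "card (nth ps ` {a, a+1, a+2}) = 3" using d a by (simp add: nth_eq_iff_index_eq)
  moreover have "induced_path E (map (nth ps) [a..<a+3])" using ip_sub[OF ip, of a 3] a by simp
  moreover have "{a..<a+3} = {a, a+1, a+2}" by auto
  ultimately show ?thesis by (metis length_map length_upt add_diff_cancel_left' set_map set_upt)
qed

lemma tr4:
  assumes ip: "induced_path E ps" and a: "a + 3 < length ps"
  shows "card (nth ps ` {a, a+1, a+2, a+3}) = 4 \<and>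
     (\<exists>qs. induced_path E qs \<and> length qs = 4 \<and> set qs = nth ps ` {a, a+1, a+2, a+3})"
proof -
  have d: "distinct ps" using ip_distinct[OF ip] .
  have "card (nth ps ` {a, a+1, a+2, a+3}) = 4" using d a by (simp add: nth_eq_iff_index_eq)
  moreover have "induced_path E (map (nth ps) [a..<a+4])" using ip_sub[OF ip, of a 4] a by simp
  moreover have "{a..<a+4} = {a, a+1, a+2, a+3}" by auto
  ultimately show ?thesis by (metis length_map length_upt add_diff_cancel_left' set_map set_upt)
qed

lemma tr22:
  assumes ip: "induced_path E ps" and ab: "a + 2 < b" and b: "b + 1 < length ps"
  shows "card (nth ps ` {a, a+1, b, b+1}) = 4 \<and>
    (\<exists>x y z w. nth ps ` {a, a+1, b, b+1} = {x, y, z, w} \<and> distinct [x, y, z, w] \<and> E x y \<and> E z w \<and>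
            \<not> E x z \<and> \<not> E x w \<and> \<not> E y z \<and> \<not> E y w)"
proof -
  have d: "distinct ps" using ip_distinct[OF ip] .
  have c: "card (nth ps ` {a, a+1, b, b+1}) = 4" using d ab b by (simp add: nth_eq_iff_index_eq)
  have ds: "distinct [ps!a, ps!(a+1), ps!b, ps!(b+1)]" using d ab b by (simp add: nth_eq_iff_index_eq)
  have e: "E (ps!a) (ps!(a+1))" "E (ps!b) (ps!(b+1))"
     "\<not> E (ps!a) (ps!b)" "\<not> E (ps!a) (ps!(b+1))" "\<not> E (ps!(a+1)) (ps!b)" "\<not> E (ps!(a+1)) (ps!(b+1))"
    using ip_adj[OF ip] ab b by auto
  show ?thesis using c ds e by auto
qed

lemma path_case:
  assumes g: "graph V E" and cf: "claw_free V E" and LV: "set ps \<subseteq> V"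
    and ip: "induced_path E ps" and jV: "j \<in> V" and jL: "j \<notin> set ps"
  defines "N \<equiv> nbhd_in E (set ps) j"
  shows "N = {}
    \<or> (card N = 2 \<and> (\<exists>a b. N = {a, b} \<and> E a b))
    \<or> (card N = 4 \<and>
        ((\<exists>a b c d. N = {a, b, c, d} \<and> distinct [a, b, c, d] \<and> E a b \<and> E c d \<and>
            \<not> E a c \<and> \<not> E a d \<and> \<not> E b c \<and> \<not> E b d)
         \<or> (\<exists>ps. induced_path E ps \<and> length ps = 4 \<and> set ps = N)))
    \<or> (\<exists>qs. induced_path E qs \<and> set qs = set ps \<and> length qs \<ge> 2 \<and> N = {hd qs, last qs})
    \<or> (card N = 3 \<and> (\<exists>qs. induced_path E qs \<and> length qs = 3 \<and> set qs = N)
        \<and> (\<forall>v\<in>N. card (nbhd_in E (set ps) v) = 2))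
    \<or> (\<exists>e. path_endpoint E (set ps) e \<and> N = {e})
    \<or> (\<exists>e x y. path_endpoint E (set ps) e \<and> x \<in> set ps \<and> y \<in> set ps \<and> E x y \<and> N = {e, x, y})"
proof -
  define n where "n = length ps"
  define S where "S = {i. i < n \<and> E j (ps!i)}"
  have d: "distinct ps" and ne: "ps \<noteq> []" using ip by (auto simp: induced_path_def)
  have NS: "N = nth ps ` S"
    unfolding N_def nbhd_in_def S_def n_def by (auto simp: in_set_conv_nth)
  have sub: "S \<subseteq> {..<n}" unfolding S_def by auto
  have H1: "y = x+1 \<or> z = y+1" if "x \<in> S" "y \<in> S" "z \<in> S" "x < y" "y < z" for x y z
    using path_H1[OF cf LV ip jV jL, of x y z] that unfolding S_def n_def by auto
  have H2: "i-1 \<in> S \<or> i+1 \<in> S" if i: "i \<in> S" "0 < i" "i+1 < n" for i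
  proof (rule ccontr)
    assume h: "\<not> (i-1 \<in> S \<or> i+1 \<in> S)"
    have ln: "i - 1 < n" "i < n" using i by auto
    have sym: "E (ps!i) j" using g i unfolding graph_def S_def by auto
    show False
    proof (rule claw_contra[OF cf, of "ps!i" j "ps!(i-1)" "ps!(i+1)"])
      show "ps!i \<in> V" "ps!(i-1) \<in> V" "ps!(i+1) \<in> V" using LV ln i(3) nth_mem unfolding n_def by blast+
      show "j \<in> V" by fact
      show "j \<noteq> ps!(i-1)" "j \<noteq> ps!(i+1)" using jL ln i(3) nth_mem unfolding n_def by metis+
      show "ps!(i-1) \<noteq> ps!(i+1)" using d ln i(3) unfolding n_def by (simp add: nth_eq_iff_index_eq)
      show "E (ps!i) j" by fact
      show "E (ps!i) (ps!(i-1))" "E (ps!i) (ps!(i+1))" using ip_adj[OF ip] ln i(2,3) unfolding n_def by auto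
      show "\<not> E j (ps!(i-1))" "\<not> E j (ps!(i+1))" using h ln i(3) unfolding S_def by auto
      show "\<not> E (ps!(i-1)) (ps!(i+1))" using ip_adj[OF ip] ln i(2,3) unfolding n_def by auto
    qed
  qed
  have hd: "hd ps = ps!0" and lt: "last ps = ps!(n-1)" using ne by (auto simp: hd_conv_nth last_conv_nth n_def)
  have endp: "path_endpoint E (set ps) (ps!0)" "path_endpoint E (set ps) (ps!(n-1))"
    unfolding path_endpoint_def using ip hd lt by auto
  have mem: "\<And>i. i < n \<Longrightarrow> ps!i \<in> set ps" unfolding n_def by simp
  have C: "S = {} \<or> (\<exists>a. S = {a} \<and> (a = 0 \<or> a+1 = n)) \<or> (\<exists>a. S = {a, a+1})
    \<or> (S = {0, n-1} \<and> 2 < n) \<or> (\<exists>a. S = {a, a+1, a+2})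
    \<or> (\<exists>a. S = {0, a, a+1} \<and> 1 < a) \<or> (\<exists>a. S = {a, a+1, n-1} \<and> a+3 < n)
    \<or> (\<exists>a. S = {a, a+1, a+2, a+3}) \<or> (\<exists>a b. S = {a, a+1, b, b+1} \<and> a+2 < b)"
    by (rule comb[OF sub H1 H2])
  show ?thesis
  proof -
    { assume "S = {}"
      then have "N = {}" using NS by simp
      then have ?thesis apply - apply (rule disjI1, assumption) done }
    note c1 = this
    { fix a assume Sa: "S = {a}" "a = 0 \<or> a+1 = n"
      then have "N = {ps!a}" using NS by simp
      moreover have "path_endpoint E (set ps) (ps!a)" using endp Sa(2) by auto
      ultimately have ?thesis apply - apply (rule disjI2, rule disjI2, rule disjI2, rule disjI2, rule disjI2, rule disjI1, blast) done }
    note c2 = this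
    { fix a assume Sa: "S = {a, a+1}"
      then have "a + 1 < n" using sub by auto
      then have ?thesis using tr2[OF ip, of a] NS Sa unfolding n_def apply - apply (rule disjI2, rule disjI1, simp) done }
    note c3 = this
    { assume Sa: "S = {0, n-1}" "2 < n"
      then have "N = {hd ps, last ps}" using NS hd lt by simp
      then have ?thesis using Sa(2) ip unfolding n_def apply - apply (rule disjI2, rule disjI2, rule disjI2, rule disjI1, rule exI[of _ ps]) apply simp done }
    note c4 = this
    { fix a assume Sa: "S = {a, a+1, a+2}"
      then have an: "a + 2 < n" using sub by auto
      have N3: "N = {ps!a, ps!(a+1), ps!(a+2)}" using NS Sa by simp
      consider "a = 0" | "a + 3 = n" | "0 < a" "a + 3 < n" using an by linarith
      then have ?thesis
      proof cases
        case 1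
        have "path_endpoint E (set ps) (ps!a) \<and> ps!(a+1) \<in> set ps \<and> ps!(a+2) \<in> set ps \<and> E (ps!(a+1)) (ps!(a+2)) \<and> N = {ps!a, ps!(a+1), ps!(a+2)}"
          using endp(1) 1 mem an N3 ip_adj[OF ip, of "a+1" "a+2"] unfolding n_def by simp
        then show ?thesis apply - apply (rule disjI2, rule disjI2, rule disjI2, rule disjI2, rule disjI2, rule disjI2) by blast
      next
        case 2
        have "n - 1 = a + 2" using 2 by simp
        then have ep: "path_endpoint E (set ps) (ps!(a+2))" using endp(2) by simp
        have "path_endpoint E (set ps) (ps!(a+2)) \<and> ps!a \<in> set ps \<and> ps!(a+1) \<in> set ps \<and> E (ps!a) (ps!(a+1)) \<and> N = {ps!(a+2), ps!a, ps!(a+1)}"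
          using ep mem an N3 ip_adj[OF ip, of a "a+1"] unfolding n_def by auto
        then show ?thesis apply - apply (rule disjI2, rule disjI2, rule disjI2, rule disjI2, rule disjI2, rule disjI2) by blast
      next
        case 3
        have "\<forall>v\<in>N. card (nbhd_in E (set ps) v) = 2"
          using N3 path_deg2[OF ip, of a] path_deg2[OF ip, of "a+1"] path_deg2[OF ip, of "a+2"] 3
          unfolding n_def by auto
        then show ?thesis using tr3[OF ip, of a] an NS Sa unfolding n_def
          apply - apply (rule disjI2, rule disjI2, rule disjI2, rule disjI2, rule disjI1) by simp
      qed }
    note c5 = this
    { fix a assume Sa: "S = {0, a, a+1}" "1 < a"
      then have an: "a + 1 < n" using sub by auto
      have "path_endpoint E (set ps) (ps!0) \<and> ps!a \<in> set ps \<and> ps!(a+1) \<in> set ps \<and> E (ps!a) (ps!(a+1)) \<and> N = {ps!0, ps!a, ps!(a+1)}"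
          using endp mem an NS Sa ip_adj[OF ip, of a "a+1"] unfolding n_def by auto
      then have ?thesis apply - apply (rule disjI2, rule disjI2, rule disjI2, rule disjI2, rule disjI2, rule disjI2) by blast }
    note c6 = this
    { fix a assume Sa: "S = {a, a+1, n-1}" "a+3 < n"
      have "path_endpoint E (set ps) (ps!(n-1)) \<and> ps!a \<in> set ps \<and> ps!(a+1) \<in> set ps \<and> E (ps!a) (ps!(a+1)) \<and> N = {ps!(n-1), ps!a, ps!(a+1)}"
          using endp mem NS Sa ip_adj[OF ip, of a "a+1"] unfolding n_def by auto
      then have ?thesis apply - apply (rule disjI2, rule disjI2, rule disjI2, rule disjI2, rule disjI2, rule disjI2) by blast }
    note c7 = this
    { fix a assume Sa: "S = {a, a+1, a+2, a+3}"
      then have an: "a + 3 < n" using sub by auto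
      then have ?thesis using tr4[OF ip, of a] NS Sa unfolding n_def apply - apply (rule disjI2, rule disjI2, rule disjI1) by simp }
    note c8 = this
    { fix a b assume Sa: "S = {a, a+1, b, b+1}" "a+2 < b"
      then have an: "b + 1 < n" using sub by auto
      then have ?thesis using tr22[OF ip Sa(2), of] NS Sa unfolding n_def apply - apply (rule disjI2, rule disjI2, rule disjI1) by simp }
    note c9 = this
    show ?thesis using C
      apply (elim disjE exE conjE)
      apply (erule c1)
      apply (erule c2, blast)
      apply (erule c2, blast)
      apply (erule c3)
      apply (erule c4, assumption)
      apply (erule c5)
      apply (erule c6, assumption)
      apply (erule c7, assumption)
      apply (erule c8)
      apply (erule c9, assumption)
      done
  qed
qed

definition cadj :: "nat \<Rightarrow> nat \<Rightarrow> nat \<Rightarrow> bool" where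
  "cadj n i k \<longleftrightarrow> (k = i+1 \<or> i = k+1 \<or> (i = 0 \<and> k = n-1) \<or> (k = 0 \<and> i = n-1))"

lemma suc_mod: "i < (n::nat) \<Longrightarrow> (i+1) mod n = (if i+1 = n then 0 else i+1)" by auto

lemma mod_cadj: "4 \<le> n \<Longrightarrow> i < n \<Longrightarrow> k < n \<Longrightarrow>
   (k = (i+1) mod n \<or> i = (k+1) mod n) \<longleftrightarrow> cadj n i k"
proof -
  assume as: "4 \<le> n" "i < n" "k < n"
  have a: "(i+1) mod n = (if i+1 = n then 0 else i+1)" using suc_mod as by blast
  have b: "(k+1) mod n = (if k+1 = n then 0 else k+1)" using suc_mod as by blast
  show ?thesis unfolding a b cadj_def using as by auto
qed

lemma hole_iff: "induced_hole E cs \<longleftrightarrow> length cs \<ge> 4 \<and> distinct cs \<and>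
   (\<forall>i<length cs. \<forall>k<length cs. E (cs!i) (cs!k) \<longleftrightarrow> cadj (length cs) i k)"
proof -
  have key: "(\<forall>i<length cs. \<forall>k<length cs. E (cs!i) (cs!k) \<longleftrightarrow> (k = (i+1) mod length cs \<or> i = (k+1) mod length cs))
     \<longleftrightarrow> (\<forall>i<length cs. \<forall>k<length cs. E (cs!i) (cs!k) \<longleftrightarrow> cadj (length cs) i k)"
    if n4: "4 \<le> length cs"
  proof
    assume A: "\<forall>i<length cs. \<forall>k<length cs. E (cs!i) (cs!k) \<longleftrightarrow> (k = (i+1) mod length cs \<or> i = (k+1) mod length cs)"
    show "\<forall>i<length cs. \<forall>k<length cs. E (cs!i) (cs!k) \<longleftrightarrow> cadj (length cs) i k"
    proof (intro allI impI)
      fix i k assume ik: "i < length cs" "k < length cs"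
      show "E (cs!i) (cs!k) \<longleftrightarrow> cadj (length cs) i k"
        using A[rule_format, OF ik] mod_cadj[OF n4 ik] by blast
    qed
  next
    assume A: "\<forall>i<length cs. \<forall>k<length cs. E (cs!i) (cs!k) \<longleftrightarrow> cadj (length cs) i k"
    show "\<forall>i<length cs. \<forall>k<length cs. E (cs!i) (cs!k) \<longleftrightarrow> (k = (i+1) mod length cs \<or> i = (k+1) mod length cs)"
    proof (intro allI impI)
      fix i k assume ik: "i < length cs" "k < length cs"
      show "E (cs!i) (cs!k) \<longleftrightarrow> (k = (i+1) mod length cs \<or> i = (k+1) mod length cs)"
        using A[rule_format, OF ik] mod_cadj[OF n4 ik] by blast
    qed
  qed
  show ?thesis unfolding induced_hole_def using key by blast
qed

lemma hole_adj:
  assumes "induced_hole E cs" "i < length cs" "k < length cs"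
  shows "E (cs!i) (cs!k) \<longleftrightarrow> cadj (length cs) i k"
  using assms unfolding hole_iff by blast

lemma cadj_shift: "4 \<le> n \<Longrightarrow> i < n \<Longrightarrow> k < n \<Longrightarrow>
  cadj n (if i+1 = n then 0 else i+1) (if k+1 = n then 0 else k+1) \<longleftrightarrow> cadj n i k"
  unfolding cadj_def by (split if_split)+ linarith

lemma hole_rot1:
  assumes "induced_hole E cs" shows "induced_hole E (rotate1 cs)"
proof -
  have h: "length cs \<ge> 4" "distinct cs"
    "\<forall>i<length cs. \<forall>k<length cs. E (cs!i) (cs!k) \<longleftrightarrow> cadj (length cs) i k"
    using assms unfolding hole_iff by blast+
  have nth: "\<And>i. i < length cs \<Longrightarrow> rotate1 cs ! i = cs ! (if i+1 = length cs then 0 else i+1)"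
  proof -
    fix i assume "i < length cs"
    then show "rotate1 cs ! i = cs ! (if i+1 = length cs then 0 else i+1)"
      using nth_rotate1[of i cs] suc_mod[of i "length cs"] by simp
  qed
  have "\<forall>i<length cs. \<forall>k<length cs. E (rotate1 cs!i) (rotate1 cs!k) \<longleftrightarrow> cadj (length cs) i k"
  proof (intro allI impI)
    fix i k assume ik: "i < length cs" "k < length cs"
    have "E (rotate1 cs!i) (rotate1 cs!k) \<longleftrightarrow>
      cadj (length cs) (if i+1 = length cs then 0 else i+1) (if k+1 = length cs then 0 else k+1)"
    proof -
      have si: "(if i+1 = length cs then 0 else i+1) < length cs" using ik by auto
      have sk: "(if k+1 = length cs then 0 else k+1) < length cs" using ik by auto
      show ?thesis unfolding nth[OF ik(1)] nth[OF ik(2)] using h(3) si sk by blast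
    qed
    also have "\<dots> \<longleftrightarrow> cadj (length cs) i k" using cadj_shift h(1) ik by blast
    finally show "E (rotate1 cs!i) (rotate1 cs!k) \<longleftrightarrow> cadj (length cs) i k" .
  qed
  then show ?thesis using h unfolding hole_iff by simp
qed

lemma hole_rot: "induced_hole E cs \<Longrightarrow> induced_hole E (rotate m cs)"
  by (induction m) (auto intro: hole_rot1)

lemma hole_butlast:
  assumes ih: "induced_hole E cs" shows "induced_path E (butlast cs)"
proof -
  have h: "length cs \<ge> 4" "distinct cs" using ih unfolding hole_iff by blast+
  have "\<forall>i<length (butlast cs). \<forall>k<length (butlast cs).
     E (butlast cs ! i) (butlast cs ! k) \<longleftrightarrow> (i = k+1 \<or> k = i+1)"
  proof (intro allI impI)
    fix i k assume ik: "i < length (butlast cs)" "k < length (butlast cs)"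
    then have "E (butlast cs ! i) (butlast cs ! k) \<longleftrightarrow> cadj (length cs) i k"
      using hole_adj[OF ih, of i k] by (simp add: nth_butlast)
    also have "\<dots> \<longleftrightarrow> (i = k+1 \<or> k = i+1)" using ik h(1) unfolding cadj_def by auto
    finally show "E (butlast cs ! i) (butlast cs ! k) \<longleftrightarrow> (i = k+1 \<or> k = i+1)" .
  qed
  moreover have "butlast cs \<noteq> []" using h(1) by (cases cs rule: rev_cases) auto
  ultimately show ?thesis using h(2) unfolding induced_path_def by (simp add: distinct_butlast)
qed

lemma cadj_pq:
  assumes "4 \<le> n" "i < n"
  defines "p \<equiv> (if i+1 = n then 0 else i+1)" and "q \<equiv> (if i = 0 then n-1 else i-1)"
  shows "p < n" "q < n" "p \<noteq> q" "\<not> cadj n p q" "cadj n i p" "cadj n i q"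
    "\<And>k. k < n \<Longrightarrow> cadj n i k \<longleftrightarrow> (k = p \<or> k = q)"
  using assms unfolding cadj_def by auto

lemma hole_deg2:
  assumes ih: "induced_hole E cs" and v: "v \<in> set cs"
  shows "card (nbhd_in E (set cs) v) = 2"
proof -
  define n where "n = length cs"
  have h: "n \<ge> 4" "distinct cs" using ih unfolding hole_iff n_def by blast+
  obtain i where i: "i < n" "v = cs!i" using v unfolding n_def by (auto simp: in_set_conv_nth)
  define p where "p = (if i+1 = n then 0 else i+1)"
  define q where "q = (if i = 0 then n-1 else i-1)"
  note pq = cadj_pq[OF h(1) i(1), folded p_def q_def]
  have "nbhd_in E (set cs) v = {cs!p, cs!q}"
  proof (rule set_eqI)
    fix w show "w \<in> nbhd_in E (set cs) v \<longleftrightarrow> w \<in> {cs!p, cs!q}"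
    proof
      assume "w \<in> nbhd_in E (set cs) v"
      then obtain k where k: "k < n" "w = cs!k" "E (cs!i) (cs!k)"
        using i unfolding n_def by (auto simp: nbhd_in_def in_set_conv_nth)
      then have "cadj n i k" using hole_adj[OF ih] i unfolding n_def by auto
      then show "w \<in> {cs!p, cs!q}" using k pq(7) by auto
    next
      assume w: "w \<in> {cs!p, cs!q}"
      have "E (cs!i) (cs!p)" "E (cs!i) (cs!q)" using hole_adj[OF ih] pq i unfolding n_def by auto
      then show "w \<in> nbhd_in E (set cs) v" using w i pq(1,2) unfolding nbhd_in_def n_def by auto
    qed
  qed
  moreover have "cs!p \<noteq> cs!q" using h(2) pq(1-3) unfolding n_def by (simp add: nth_eq_iff_index_eq)
  ultimately show ?thesis by simp
qed

lemma hole_nb: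
  assumes g: "graph V E" and cf: "claw_free V E" and LV: "set cs \<subseteq> V"
    and ih: "induced_hole E cs" and jV: "j \<in> V" and jL: "j \<notin> set cs"
    and i: "i < length cs" and ej: "E j (cs!i)"
  shows "\<exists>k<length cs. cadj (length cs) i k \<and> E j (cs!k)"
proof (rule ccontr)
  assume nk: "\<not> ?thesis"
  define n where "n = length cs"
  have h: "n \<ge> 4" "distinct cs" using ih unfolding hole_iff n_def by blast+
  define p where "p = (if i+1 = n then 0 else i+1)"
  define q where "q = (if i = 0 then n-1 else i-1)"
  note pq = cadj_pq[OF h(1) i[folded n_def], folded p_def q_def]
  show False
  proof (rule claw_contra[OF cf, of "cs!i" j "cs!p" "cs!q"])
    show "cs!i \<in> V" "cs!p \<in> V" "cs!q \<in> V" using LV i pq(1,2) nth_mem unfolding n_def by blast+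
    show "j \<in> V" by fact
    show "j \<noteq> cs!p" "j \<noteq> cs!q" using jL pq(1,2) nth_mem unfolding n_def by metis+
    show "cs!p \<noteq> cs!q" using h(2) pq(1-3) unfolding n_def by (simp add: nth_eq_iff_index_eq)
    show "E (cs!i) j" using g ej unfolding graph_def by auto
    show "E (cs!i) (cs!p)" "E (cs!i) (cs!q)" using hole_adj[OF ih] pq i unfolding n_def by auto
    show "\<not> E j (cs!p)" "\<not> E j (cs!q)" using nk pq unfolding n_def by auto
    show "\<not> E (cs!p) (cs!q)" using hole_adj[OF ih] pq unfolding n_def by auto
  qed
qed

lemma hole_case:
  assumes g: "graph V E" and cf: "claw_free V E" and LV: "set cs \<subseteq> V"
    and ih: "induced_hole E cs" and jV: "j \<in> V" and jL: "j \<notin> set cs"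
  defines "N \<equiv> nbhd_in E (set cs) j"
  shows "N = {}
    \<or> (card N = 2 \<and> (\<exists>a b. N = {a, b} \<and> E a b))
    \<or> (card N = 4 \<and>
        ((\<exists>a b c d. N = {a, b, c, d} \<and> distinct [a, b, c, d] \<and> E a b \<and> E c d \<and>
            \<not> E a c \<and> \<not> E a d \<and> \<not> E b c \<and> \<not> E b d)
         \<or> (\<exists>ps. induced_path E ps \<and> length ps = 4 \<and> set ps = N)))
    \<or> (card (set cs) = 4 \<and> N = set cs)
    \<or> (card N = 3 \<and> (\<exists>qs. induced_path E qs \<and> length qs = 3 \<and> set qs = N)
        \<and> (\<forall>v\<in>N. card (nbhd_in E (set cs) v) = 2))
    \<or> (card (set cs) = 5 \<and> N = set cs)"
proof -
  define n where "n = length cs"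
  have n4: "4 \<le> n" and d: "distinct cs" using ih unfolding hole_iff n_def by blast+
  have cL: "card (set cs) = n" using d distinct_card unfolding n_def by blast
  show ?thesis
  proof (cases "\<forall>i<n. E j (cs!i)")
    case True
    have NL: "N = set cs" using True unfolding N_def nbhd_in_def n_def by (auto simp: in_set_conv_nth)
    have "n \<le> 5"
    proof (rule ccontr)
      assume "\<not> n \<le> 5"
      then have n6: "6 \<le> n" by simp
      show False
      proof (rule claw_contra[OF cf jV, of "cs!0" "cs!2" "cs!4"])
        have "0 < length cs" using n6 unfolding n_def by linarith
        then show "cs!0 \<in> V" using LV nth_mem by blast
        have "2 < length cs" using n6 unfolding n_def by linarith
        then show "cs!2 \<in> V" using LV nth_mem by blast
        have "4 < length cs" using n6 unfolding n_def by linarith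
        then show "cs!4 \<in> V" using LV nth_mem by blast
        have l: "0 < length cs" "2 < length cs" "4 < length cs" using n6 unfolding n_def by linarith+
        show "cs!0 \<noteq> cs!2" using nth_eq_iff_index_eq[OF d l(1) l(2)] by simp
        show "cs!0 \<noteq> cs!4" using nth_eq_iff_index_eq[OF d l(1) l(3)] by simp
        show "cs!2 \<noteq> cs!4" using nth_eq_iff_index_eq[OF d l(2) l(3)] by simp
        show "E j (cs!0)" "E j (cs!2)" "E j (cs!4)" using True n6 by auto
        show "\<not> E (cs!0) (cs!2)" "\<not> E (cs!0) (cs!4)" "\<not> E (cs!2) (cs!4)"
          using hole_adj[OF ih l(1) l(2)] hole_adj[OF ih l(1) l(3)] hole_adj[OF ih l(2) l(3)] n6
          unfolding n_def cadj_def by auto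
      qed
    qed
    then have "n = 4 \<or> n = 5" using n4 by auto
    then show ?thesis using NL cL by auto
  next
    case False
    then obtain r where r: "r < n" "\<not> E j (cs!r)" by auto
    define cs' where "cs' = rotate (r+1) cs"
    have ih': "induced_hole E cs'" unfolding cs'_def by (rule hole_rot[OF ih])
    have len': "length cs' = n" unfolding cs'_def n_def by simp
    have set': "set cs' = set cs" unfolding cs'_def by simp
    have "cs'!(n-1) = cs!((r+1 + (n-1)) mod n)" unfolding cs'_def n_def
      using n4 nth_rotate[of "n-1" cs "r+1"] n_def by simp
    also have "(r+1 + (n-1)) mod n = r" using r n4 by simp
    finally have lastr: "cs'!(n-1) = cs!r" .
    define ps where "ps = butlast cs'"
    have ip: "induced_path E ps" unfolding ps_def by (rule hole_butlast[OF ih'])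
    have lp: "length ps = n-1" unfolding ps_def using len' by simp
    have psn: "\<And>i. i < n-1 \<Longrightarrow> ps!i = cs'!i" unfolding ps_def using len' by (simp add: nth_butlast)
    have ne': "cs' \<noteq> []" using len' n4 by auto
    have split: "set cs' = insert (cs'!(n-1)) (set ps)"
    proof -
      have "cs' = ps @ [last cs']" unfolding ps_def using ne' by simp
      then have "set cs' = set ps \<union> {last cs'}" by (metis set_append empty_set list.simps(15))
      moreover have "last cs' = cs'!(n-1)" using ne' len' by (simp add: last_conv_nth)
      ultimately show ?thesis by auto
    qed
    have LV': "set ps \<subseteq> V" using LV split set' by auto
    have jL': "j \<notin> set ps" using jL split set' by auto
    have N': "N = nbhd_in E (set ps) j" unfolding N_def nbhd_in_def using split set' lastr r(2) by auto
    define S where "S = {i. i < n-1 \<and> E j (ps!i)}"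
    have NS: "N = nth ps ` S"
      unfolding N' nbhd_in_def S_def using lp by (auto simp: in_set_conv_nth)
    have sub: "S \<subseteq> {..<n-1}" unfolding S_def by auto
    have H1: "y = x+1 \<or> z = y+1" if "x \<in> S" "y \<in> S" "z \<in> S" "x < y" "y < z" for x y z
      using path_H1[OF cf LV' ip jV jL', of x y z] that lp unfolding S_def by auto
    have H2': "i+1 \<in> S \<or> (0 < i \<and> i-1 \<in> S)" if i: "i \<in> S" for i
    proof -
      have iS: "i < n-1" "E j (ps!i)" using i unfolding S_def by auto
      have "E j (cs'!i)" using iS psn by simp
      moreover have "i < length cs'" using iS len' by simp
      moreover have "set cs' \<subseteq> V" "j \<notin> set cs'" using LV jL set' by auto
      ultimately obtain k where k: "k < n" "cadj n i k" "E j (cs'!k)"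
        using hole_nb[OF g cf _ ih' jV, of i] len' by auto
      have "k \<noteq> n-1" using k(3) lastr r(2) by auto
      then have kn: "k < n-1" using k(1) by simp
      then have "k = i+1 \<or> i = k+1" using k(2) iS(1) unfolding cadj_def by auto
      moreover have "k \<in> S" using kn k(3) psn unfolding S_def by simp
      ultimately show ?thesis by auto
    qed
    have H2: "i-1 \<in> S \<or> i+1 \<in> S" if "i \<in> S" "0 < i" "i+1 < n-1" for i
      using H2'[OF that(1)] by auto
    have C: "S = {} \<or> (\<exists>a. S = {a} \<and> (a = 0 \<or> a+1 = n-1)) \<or> (\<exists>a. S = {a, a+1})
      \<or> (S = {0, n-1-1} \<and> 2 < n-1) \<or> (\<exists>a. S = {a, a+1, a+2})
      \<or> (\<exists>a. S = {0, a, a+1} \<and> 1 < a) \<or> (\<exists>a. S = {a, a+1, n-1-1} \<and> a+3 < n-1)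
      \<or> (\<exists>a. S = {a, a+1, a+2, a+3}) \<or> (\<exists>a b. S = {a, a+1, b, b+1} \<and> a+2 < b)"
      by (rule comb[OF sub H1 H2])
    have NsubL: "N \<subseteq> set cs" unfolding N_def nbhd_in_def by auto
    { assume "S = {}"
      then have "N = {}" using NS by simp
      then have ?thesis apply - apply (rule disjI1, assumption) done }
    note c1 = this
    { fix a assume Sa: "S = {a}"
      then have False using H2'[of a] by auto }
    note c2 = this
    { fix a assume Sa: "S = {a, a+1}"
      then have "a + 1 < n-1" using sub by auto
      then have ?thesis using tr2[OF ip, of a] NS Sa lp apply - apply (rule disjI2, rule disjI1, simp) done }
    note c3 = this
    { assume Sa: "S = {0, n-1-1}" "2 < n-1"
      then have False using H2'[of 0] by auto }
    note c4 = this
    { fix a assume Sa: "S = {a, a+1, a+2}"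
      then have an: "a + 2 < n-1" using sub by auto
      have "\<forall>v\<in>N. card (nbhd_in E (set cs) v) = 2" using NsubL hole_deg2[OF ih] by auto
      then have ?thesis using tr3[OF ip, of a] an NS Sa lp
          apply - apply (rule disjI2, rule disjI2, rule disjI2, rule disjI2, rule disjI1) by simp }
    note c5 = this
    { fix a assume Sa: "S = {0, a, a+1}" "1 < a"
      then have False using H2'[of 0] by auto }
    note c6 = this
    { fix a assume Sa: "S = {a, a+1, n-1-1}" "a+3 < n-1"
      then have False using H2'[of "n-1-1"] sub by auto }
    note c7 = this
    { fix a assume Sa: "S = {a, a+1, a+2, a+3}"
      then have an: "a + 3 < n-1" using sub by auto
      then have ?thesis using tr4[OF ip, of a] NS Sa lp apply - apply (rule disjI2, rule disjI2, rule disjI1) by simp }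
    note c8 = this
    { fix a b assume Sa: "S = {a, a+1, b, b+1}" "a+2 < b"
      then have an: "b + 1 < n-1" using sub by auto
      then have ?thesis using tr22[OF ip Sa(2)] NS Sa lp apply - apply (rule disjI2, rule disjI2, rule disjI1) by simp }
    note c9 = this
    show ?thesis using C
      apply (elim disjE exE conjE)
      apply (erule c1)
      apply (erule c2 [THEN FalseE])
      apply (erule c2 [THEN FalseE])
      apply (erule c3)
      apply (erule c4 [THEN FalseE], assumption)
      apply (erule c5)
      apply (erule c6 [THEN FalseE], assumption)
      apply (erule c7 [THEN FalseE], assumption)
      apply (erule c8)
      apply (erule c9, assumption)
      done
  qed
qed

theorem lemma2:
  fixes V L :: "'a set" and E :: "'a \<Rightarrow> 'a \<Rightarrow> bool" and j :: 'a
  assumes "graph V E" and "claw_free V E"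
    and "L \<subseteq> V"
    and "is_induced_path_set E L \<or> is_hole_set E L"
    and "j \<in> V - L"
  defines "N \<equiv> nbhd_in E L j"
  shows
   "N = {}
    \<or> (card N = 2 \<and> (\<exists>a b. N = {a, b} \<and> E a b))
    \<or> (card N = 4 \<and>
        ((\<exists>a b c d. N = {a, b, c, d} \<and> distinct [a, b, c, d] \<and> E a b \<and> E c d \<and>
            \<not> E a c \<and> \<not> E a d \<and> \<not> E b c \<and> \<not> E b d)
         \<or> (\<exists>ps. induced_path E ps \<and> length ps = 4 \<and> set ps = N)))
    \<or> (is_hole_set E L \<and> card L = 4 \<and> N = L)
    \<or> (\<exists>ps. induced_path E ps \<and> set ps = L \<and> length ps \<ge> 2 \<and> N = {hd ps, last ps})
    \<or> (card N = 3 \<and> (\<exists>ps. induced_path E ps \<and> length ps = 3 \<and> set ps = N)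
        \<and> (\<forall>v\<in>N. card (nbhd_in E L v) = 2))
    \<or> (is_hole_set E L \<and> card L = 5 \<and> N = L)
    \<or> (is_induced_path_set E L \<and> (\<exists>e. path_endpoint E L e \<and> N = {e}))
    \<or> (is_induced_path_set E L \<and>
        (\<exists>e x y. path_endpoint E L e \<and> x \<in> L \<and> y \<in> L \<and> E x y \<and> N = {e, x, y}))"
proof -
  from assms(4) show ?thesis
  proof
    assume "is_induced_path_set E L"
    then obtain ps where ip: "induced_path E ps" and L: "set ps = L"
      unfolding is_induced_path_set_def by blast
    have isp: "is_induced_path_set E L" by fact
    have LV: "set ps \<subseteq> V" using assms(3) L by simp
    have jV: "j \<in> V" and jL: "j \<notin> set ps" using assms(5) L by auto
    note P = path_case[OF assms(1,2) LV ip jV jL, unfolded L, folded N_def]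
    show ?thesis using P
      apply (elim disjE)
      apply (rule disjI1, assumption)
      apply (rule disjI2, rule disjI1, assumption)
      apply (rule disjI2, rule disjI2, rule disjI1, assumption)
      apply (rule disjI2, rule disjI2, rule disjI2, rule disjI2, rule disjI1, assumption)
      apply (rule disjI2, rule disjI2, rule disjI2, rule disjI2, rule disjI2, rule disjI1, assumption)
      apply (rule disjI2, rule disjI2, rule disjI2, rule disjI2, rule disjI2, rule disjI2, rule disjI2, rule disjI1, rule conjI, rule isp, assumption)
      apply (rule disjI2, rule disjI2, rule disjI2, rule disjI2, rule disjI2, rule disjI2, rule disjI2, rule disjI2, rule conjI, rule isp, assumption)
      done
  next
    assume "is_hole_set E L"
    then obtain cs where ih: "induced_hole E cs" and L: "set cs = L"
      unfolding is_hole_set_def by blast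
    have ish: "is_hole_set E L" by fact
    have LV: "set cs \<subseteq> V" using assms(3) L by simp
    have jV: "j \<in> V" and jL: "j \<notin> set cs" using assms(5) L by auto
    note P = hole_case[OF assms(1,2) LV ih jV jL, unfolded L, folded N_def]
    show ?thesis using P
      apply (elim disjE)
      apply (rule disjI1, assumption)
      apply (rule disjI2, rule disjI1, assumption)
      apply (rule disjI2, rule disjI2, rule disjI1, assumption)
      apply (rule disjI2, rule disjI2, rule disjI2, rule disjI1, rule conjI, rule ish, assumption)
      apply (rule disjI2, rule disjI2, rule disjI2, rule disjI2, rule disjI2, rule disjI1, assumption)
      apply (rule disjI2, rule disjI2, rule disjI2, rule disjI2, rule disjI2, rule disjI2, rule disjI1, rule conjI, rule ish, assumption)
      done
  qed
qed

end
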